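(* Assume (H1), (H3), (H4). Let $u\in C(\mathbb{R}^n\times[0,T))$ be a Barron–Jensen solution of (1.1)–(1.2). Let $x_0\in\mathbb{R}^n$, $0<\rho<r$, and $\gamma\ge(\frac{\beta}{2}+2)C_1+K_3$. Then for every sufficiently small $\varepsilon>0$ (depending on $\rho$, $\gamma$, $T$ and $\max_{\overline{B_r(x_0)}\times[0,T)}|u|$, assumed finite), the inf-convolution $$u_\varepsilon(x,t)=\inf_{y\in\overline{B_r(x_0)}}\Big\{u(y,t)+e^{-\gamma t}\frac{|x-y|^2}{\varepsilon^2}\Big\}$$ is a viscosity subsolution of $$u_t+H(x,t,u,D_xu)=\frac{\beta C_1}{2}e^{\gamma t}\varepsilon^2\quad\text{in }B_{r-\rho}(x_0)\times(0,T).$$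
   Context: $T>0$; $H:\mathbb{R}^n\times[0,T]\times\mathbb{R}\times\mathbb{R}^n\to\mathbb{R}$ continuous; $u_0$ Lipschitz. Problem (1.1)–(1.2): $u_t+H(x,t,u,D_xu)=0$ in $\mathbb{R}^n\times(0,T)$, $u(x,0)=u_0(x)$. (H1) there exist $C_1\ge0$, $\beta\in\{0,1\}$ with $|H(x,t,u,p)-H(y,t,u,p)|\le C_1(\beta+|p|)|x-y|$. (H3) there exists $K_3\ge0$ with $|H(x,t,u,p)-H(x,t,v,p)|\le K_3|u-v|$. (H4) $p\mapsto H(x,t,u,p)$ convex. Barron–Jensen solution: $u$ with $u(\cdot,0)=u_0$ such that for every $\phi\in C^1(\mathbb{R}^n\times(0,T))$, if $u-\phi$ has a local minimum at $(x,t)\in\mathbb{R}^n\times(0,T)$ then $\phi_t(x,t)+H(x,t,u(x,t),D_x\phi(x,t))=0$. Viscosity subsolution of $u_t+H=g$ in open $O$: for every $\phi\in C^1(O)$ with $u-\phi$ having a local max at $(x,t)\in O$, $\phi_t+H(x,t,u(x,t),D_x\phi(x,t))\le g(x,t)$. *)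

theory Defs
  imports "HOL-Analysis.Analysis"
begin

definition C1_on :: "('a::euclidean_space \<times> real \<Rightarrow> real) \<Rightarrow> ('a \<times> real) set
    \<Rightarrow> ('a \<times> real \<Rightarrow> 'a) \<Rightarrow> ('a \<times> real \<Rightarrow> real) \<Rightarrow> bool" where
  "C1_on \<phi> S Dx Dt \<longleftrightarrow>
     (\<forall>p\<in>S. (\<phi> has_derivative (\<lambda>(h, s). Dx p \<bullet> h + Dt p * s)) (at p))
     \<and> continuous_on S Dx \<and> continuous_on S Dt"

definition local_min_at :: "('a::real_normed_vector \<times> real \<Rightarrow> real) \<Rightarrow> ('a \<times> real) set \<Rightarrow> 'a \<times> real \<Rightarrow> bool" where
  "local_min_at f S p \<longleftrightarrow> (\<exists>e>0. \<forall>q\<in>ball p e \<inter> S. f p \<le> f q)"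

definition local_max_at :: "('a::real_normed_vector \<times> real \<Rightarrow> real) \<Rightarrow> ('a \<times> real) set \<Rightarrow> 'a \<times> real \<Rightarrow> bool" where
  "local_max_at f S p \<longleftrightarrow> (\<exists>e>0. \<forall>q\<in>ball p e \<inter> S. f q \<le> f p)"

definition BJ_solution :: "('a::euclidean_space \<Rightarrow> real \<Rightarrow> real \<Rightarrow> 'a \<Rightarrow> real) \<Rightarrow> real
    \<Rightarrow> ('a \<Rightarrow> real) \<Rightarrow> ('a \<Rightarrow> real \<Rightarrow> real) \<Rightarrow> bool" where
  "BJ_solution H T u0 u \<longleftrightarrow>
     (\<forall>x. u x 0 = u0 x) \<and>
     (\<forall>\<phi> Dx Dt. C1_on \<phi> (UNIV \<times> {0<..<T}) Dx Dt \<longrightarrow>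
        (\<forall>x t. t \<in> {0<..<T} \<longrightarrow> local_min_at (\<lambda>(y, s). u y s - \<phi> (y, s)) (UNIV \<times> {0<..<T}) (x, t) \<longrightarrow>
           Dt (x, t) + H x t (u x t) (Dx (x, t)) = 0))"

definition visc_subsolution :: "('a::euclidean_space \<Rightarrow> real \<Rightarrow> real \<Rightarrow> 'a \<Rightarrow> real)
    \<Rightarrow> ('a \<Rightarrow> real \<Rightarrow> real) \<Rightarrow> ('a \<times> real) set \<Rightarrow> ('a \<Rightarrow> real \<Rightarrow> real) \<Rightarrow> bool" where
  "visc_subsolution H g S w \<longleftrightarrow>
     (\<forall>\<phi> Dx Dt. C1_on \<phi> S Dx Dt \<longrightarrow>
        (\<forall>x t. (x, t) \<in> S \<longrightarrow> local_max_at (\<lambda>(y, s). w y s - \<phi> (y, s)) S (x, t) \<longrightarrow>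
           Dt (x, t) + H x t (w x t) (Dx (x, t)) \<le> g x t))"

end

theory Submission imports Defs begin

lemma danskin_sep:
  fixes f :: "'z::euclidean_space \<Rightarrow> 'm::metric_space \<Rightarrow> real" and g :: "'m \<Rightarrow> 'z"
  assumes M: "compact M" "M \<noteq> {}"
    and fc: "\<And>z. continuous_on M (f z)"
    and gc: "continuous_on M g"
    and quad: "\<And>m h e. m \<in> M \<Longrightarrow> f (z0 + h *\<^sub>R e) m = f z0 m + h * (g m \<bullet> e) + h\<^sup>2 * Q m e"
    and Qb: "\<And>e. \<exists>B. \<forall>m\<in>M. 0 \<le> Q m e \<and> Q m e \<le> B"
    and mx: "\<And>z. dist z z0 < \<delta> \<Longrightarrow> Inf (f z ` M) - \<psi> z \<le> Inf (f z0 ` M) - \<psi> z0"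
    and dpos: "\<delta> > 0"
    and der: "(\<psi> has_derivative (\<lambda>h. G \<bullet> h)) (at z0)"
    and C: "closed C" "convex C" "\<And>m. m \<in> M \<Longrightarrow> f z0 m = Inf (f z0 ` M) \<Longrightarrow> g m \<in> C"
  shows "G \<in> C"
proof (rule ccontr)
  assume GC: "G \<notin> C"
  have minex: "\<exists>m\<in>M. \<forall>m'\<in>M. f z m \<le> f z m'" for z
    using continuous_attains_inf[OF M fc] by blast
  have Infeq: "Inf (f z ` M) = f z m" if "m \<in> M" "\<forall>m'\<in>M. f z m \<le> f z m'" for z m
    using that by (intro cInf_eq_minimum) auto
  obtain a b where ab: "a \<bullet> G < b" "\<And>x. x \<in> C \<Longrightarrow> b < a \<bullet> x"
    using separating_hyperplane_closed_point[OF C(2) C(1) GC] by blast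
  obtain m0 where m0: "m0 \<in> M" "\<forall>m'\<in>M. f z0 m0 \<le> f z0 m'" using minex by blast
  define W0 where "W0 = Inf (f z0 ` M)"
  have W0: "W0 = f z0 m0" using Infeq[OF m0] W0_def by simp
  have gcont: "continuous_on M (\<lambda>m. g m \<bullet> a)"
    by (intro continuous_intros gc)
  obtain Bg where Bg: "\<And>m. m \<in> M \<Longrightarrow> \<bar>g m \<bullet> a\<bar> \<le> Bg"
  proof -
    have "bounded ((\<lambda>m. g m \<bullet> a) ` M)"
      by (intro compact_imp_bounded compact_continuous_image gcont M)
    then obtain B where "\<forall>x\<in>(\<lambda>m. g m \<bullet> a) ` M. norm x \<le> B" by (auto simp: bounded_iff)
    then show ?thesis using that by auto
  qed
  obtain BQ where BQ: "\<And>m. m \<in> M \<Longrightarrow> 0 \<le> Q m a \<and> Q m a \<le> BQ" using Qb by blast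
  define K' where "K' = {m\<in>M. g m \<bullet> a \<le> b}"
  have K'c: "compact K'"
  proof -
    have "closedin (top_of_set M) K'"
      unfolding K'_def using continuous_closedin_preimage[OF gcont, of "{..b}"]
      by (simp add: vimage_def Int_def)
    then show ?thesis using M(1) closedin_compact by blast
  qed
  obtain \<kappa> where \<kappa>: "\<kappa> > 0" "\<And>m. m \<in> K' \<Longrightarrow> f z0 m \<ge> W0 + \<kappa>"
  proof (cases "K' = {}")
    case True then show ?thesis using that[of 1] by auto
  next
    case False
    obtain m' where m': "m' \<in> K'" "\<forall>m\<in>K'. f z0 m' \<le> f z0 m"
      using continuous_attains_inf[OF K'c False continuous_on_subset[OF fc]] K'_def by blast
    have "f z0 m' > W0"
    proof (rule ccontr)
      assume "\<not> f z0 m' > W0"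
      then have "f z0 m' = W0" using m0 W0 m' K'_def by force
      then have "g m' \<in> C" using C(3) m' K'_def W0_def by auto
      then show False using ab(2)[of "g m'"] m' K'_def by (auto simp: inner_commute)
    qed
    then show ?thesis using that[of "f z0 m' - W0"] m' by force
  qed
  define \<eta> where "\<eta> = (b - a \<bullet> G) / 2"
  have \<eta>: "\<eta> > 0" using ab \<eta>_def by simp
  have na1: "norm a + 1 > 0" by (simp add: add_nonneg_pos)
  obtain d where d: "d > 0" "\<And>y. norm (y - z0) < d \<Longrightarrow> norm (\<psi> y - \<psi> z0 - G \<bullet> (y - z0)) \<le> \<eta> / (norm a + 1) * norm (y - z0)"
  proof -
    have "\<eta> / (norm a + 1) > 0" using \<eta> na1 by simp
    from der[unfolded has_derivative_at_alt] this show ?thesis using that by blast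
  qed
  define h where "h = Min {1, d / (norm a + 1), \<delta> / (norm a + 1), \<kappa> / (2 * Bg + BQ + 1)}"
  have Bg0: "Bg \<ge> 0" using Bg m0 by force
  have BQ0: "BQ \<ge> 0" using BQ m0 by force
  have hpos: "h > 0" unfolding h_def using d dpos \<kappa> Bg0 BQ0 na1 by (simp add: add_pos_nonneg)
  have h1: "h \<le> 1" unfolding h_def by simp
  have hna: "h * norm a < d" "h * norm a < \<delta>"
  proof -
    have "h \<le> d / (norm a + 1)" "h \<le> \<delta> / (norm a + 1)" unfolding h_def by auto
    then have "h * (norm a + 1) \<le> d" "h * (norm a + 1) \<le> \<delta>" using na1 by (simp_all add: pos_le_divide_eq)
    then show "h * norm a < d" "h * norm a < \<delta>" using hpos by (simp_all add: algebra_simps)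
  qed
  have hk: "h * (2 * Bg + BQ) < \<kappa>"
  proof -
    have "h \<le> \<kappa> / (2 * Bg + BQ + 1)" unfolding h_def by auto
    then have "h * (2 * Bg + BQ + 1) \<le> \<kappa>" using Bg0 BQ0 by (simp add: field_simps add_pos_nonneg)
    then show ?thesis using hpos by (simp add: algebra_simps)
  qed
  define z1 where "z1 = z0 + h *\<^sub>R a"
  obtain mh where mh: "mh \<in> M" "\<forall>m'\<in>M. f z1 mh \<le> f z1 m'" using minex by blast
  have W1: "Inf (f z1 ` M) = f z1 mh" using Infeq[OF mh] .
  have up: "f z1 mh \<le> W0 + h * Bg + h\<^sup>2 * BQ"
  proof -
    have "f z1 mh \<le> f z1 m0" using mh m0 by auto
    also have "\<dots> = W0 + h * (g m0 \<bullet> a) + h\<^sup>2 * Q m0 a" using quad[OF m0(1)] W0 z1_def by simp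
    also have "\<dots> \<le> W0 + h * Bg + h\<^sup>2 * BQ"
      using Bg[OF m0(1)] BQ[OF m0(1)] hpos
      by (intro add_mono mult_left_mono) auto
    finally show ?thesis .
  qed
  have eq1: "f z1 mh = f z0 mh + h * (g mh \<bullet> a) + h\<^sup>2 * Q mh a" using quad[OF mh(1)] z1_def by simp
  have notK: "mh \<notin> K'"
  proof
    assume "mh \<in> K'"
    then have "f z0 mh \<ge> W0 + \<kappa>" using \<kappa> by auto
    moreover have "h * (g mh \<bullet> a) \<ge> - (h * Bg)"
    proof -
      have "- Bg \<le> g mh \<bullet> a" using Bg[OF mh(1)] by linarith
      from mult_left_mono[OF this, of h] hpos show ?thesis by simp
    qed
    moreover have "h\<^sup>2 * Q mh a \<ge> 0" using BQ[OF mh(1)] by simp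
    moreover have "h\<^sup>2 * BQ \<le> h * BQ" using h1 hpos BQ0
      by (simp add: power2_eq_square mult_left_le_one_le mult.assoc mult_left_mono)
    moreover have "h * (2 * Bg + BQ) = 2 * (h * Bg) + h * BQ" by (simp add: algebra_simps)
    ultimately show False using up eq1 hk by linarith
  qed
  then have gb: "g mh \<bullet> a > b" using mh K'_def by auto
  have low: "f z1 mh - W0 > h * b"
  proof -
    have "f z1 mh \<ge> f z0 mh + h * (g mh \<bullet> a)" using eq1 BQ[OF mh(1)] by simp
    moreover have "f z0 mh \<ge> W0" using m0 mh W0 by auto
    moreover have "h * (g mh \<bullet> a) > h * b" using gb hpos by simp
    ultimately show ?thesis by simp
  qed
  have "dist z1 z0 < \<delta>" using hna hpos by (simp add: z1_def dist_norm)
  then have mx1: "f z1 mh - W0 \<le> \<psi> z1 - \<psi> z0" using mx[of z1] W1 W0_def by simp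
  have "norm (z1 - z0) < d" using hna hpos by (simp add: z1_def)
  then have "norm (\<psi> z1 - \<psi> z0 - G \<bullet> (z1 - z0)) \<le> \<eta> / (norm a + 1) * norm (z1 - z0)" using d by blast
  then have "\<psi> z1 - \<psi> z0 \<le> h * (G \<bullet> a) + \<eta> / (norm a + 1) * (h * norm a)"
    using hpos by (simp add: z1_def)
  also have "\<eta> / (norm a + 1) * (h * norm a) \<le> h * \<eta>"
  proof -
    have "\<eta> / (norm a + 1) * norm a \<le> \<eta>" using \<eta> na1 by (simp add: divide_le_eq mult_left_mono)
    then show ?thesis using hpos by (metis mult.commute mult.left_commute mult_left_mono less_imp_le)
  qed
  finally have "\<psi> z1 - \<psi> z0 \<le> h * (G \<bullet> a + \<eta>)" by (simp add: algebra_simps)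
  moreover have "G \<bullet> a + \<eta> < b" using \<eta>_def ab by (simp add: inner_commute)
  ultimately have "\<psi> z1 - \<psi> z0 < h * b" using hpos
    by (smt (verit) mult_strict_left_mono)
  with low mx1 show False by simp
qed

lemma sublevel_convex:
  fixes F :: "'a::real_vector \<Rightarrow> real"
  assumes "convex_on UNIV F"
  shows "convex {P :: 'a \<times> real. snd P + F (fst P) \<le> c}"
  unfolding convex_def
proof (intro allI ballI impI)
  fix x y :: "'a \<times> real" and u v :: real
  assume x: "x \<in> {P. snd P + F (fst P) \<le> c}" and y: "y \<in> {P. snd P + F (fst P) \<le> c}"
    and uv: "0 \<le> u" "0 \<le> v" "u + v = 1"
  have "F (u *\<^sub>R fst x + v *\<^sub>R fst y) \<le> u * F (fst x) + v * F (fst y)"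
    using assms uv unfolding convex_on_def by auto
  moreover have "u * (snd x + F (fst x)) \<le> u * c" "v * (snd y + F (fst y)) \<le> v * c"
    using x y uv by (auto intro: mult_left_mono)
  ultimately have "u * snd x + v * snd y + F (u *\<^sub>R fst x + v *\<^sub>R fst y) \<le> (u + v) * c"
    by (simp add: algebra_simps)
  then show "u *\<^sub>R x + v *\<^sub>R y \<in> {P. snd P + F (fst P) \<le> c}" using uv by simp
qed

lemma unif_inf:
  fixes G :: "'z::metric_space \<Rightarrow> 'y::metric_space \<Rightarrow> real"
  assumes Y: "compact Y" "Y \<noteq> {}"
    and uc: "uniformly_continuous_on (Z \<times> Y) (\<lambda>(z, y). G z y)"
  shows "uniformly_continuous_on Z (\<lambda>z. Inf (G z ` Y))"
  unfolding uniformly_continuous_on_def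
proof (intro allI impI)
  fix e :: real assume e: "e > 0"
  obtain d where d: "d > 0" "\<And>p p'. p \<in> Z \<times> Y \<Longrightarrow> p' \<in> Z \<times> Y \<Longrightarrow> dist p' p < d \<Longrightarrow>
       dist ((\<lambda>(z, y). G z y) p') ((\<lambda>(z, y). G z y) p) < e / 2"
    using uc[unfolded uniformly_continuous_on_def, rule_format, of "e/2"] e by auto
  have cont: "continuous_on Y (G z)" if "z \<in> Z" for z
  proof -
    have "continuous_on (Z \<times> Y) (\<lambda>(z, y). G z y)" using uc uniformly_continuous_imp_continuous by blast
    then have "continuous_on Y ((\<lambda>(z, y). G z y) \<circ> (\<lambda>y. (z, y)))"
      by (intro continuous_on_compose continuous_intros) (auto intro: continuous_on_subset simp: that)
    then show ?thesis by (simp add: o_def)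
  qed
  have att: "\<exists>y\<in>Y. Inf (G z ` Y) = G z y \<and> (\<forall>y'\<in>Y. G z y \<le> G z y')" if zZ: "z \<in> Z" for z
  proof -
    obtain y where y: "y \<in> Y" "\<forall>y'\<in>Y. G z y \<le> G z y'"
      using continuous_attains_inf[OF Y cont[OF zZ]] by blast
    then have "Inf (G z ` Y) = G z y" by (intro cInf_eq_minimum) auto
    then show ?thesis using y by blast
  qed
  have close: "\<bar>G z' y - G z y\<bar> < e / 2" if "z \<in> Z" "z' \<in> Z" "y \<in> Y" "dist z' z < d" for z z' y
    using d(2)[of "(z, y)" "(z', y)"] that by (simp add: dist_Pair_Pair dist_real_def)
  show "\<exists>d>0. \<forall>x\<in>Z. \<forall>x'\<in>Z. dist x' x < d \<longrightarrow> dist (Inf (G x' ` Y)) (Inf (G x ` Y)) < e"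
  proof (intro exI[of _ d] conjI ballI impI)
    fix z z' assume zz: "z \<in> Z" "z' \<in> Z" "dist z' z < d"
    obtain y1 where y1: "y1 \<in> Y" "Inf (G z ` Y) = G z y1" "\<forall>y'\<in>Y. G z y1 \<le> G z y'" using att[OF zz(1)] by blast
    obtain y2 where y2: "y2 \<in> Y" "Inf (G z' ` Y) = G z' y2" "\<forall>y'\<in>Y. G z' y2 \<le> G z' y'" using att[OF zz(2)] by blast
    have "G z' y2 \<le> G z' y1" using y2 y1 by auto
    moreover have "G z y1 \<le> G z y2" using y1 y2 by auto
    moreover have "\<bar>G z' y1 - G z y1\<bar> < e / 2" "\<bar>G z' y2 - G z y2\<bar> < e / 2"
      using close zz y1 y2 by auto
    ultimately show "dist (Inf (G z' ` Y)) (Inf (G z ` Y)) < e"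
      unfolding dist_real_def y1(2) y2(2) abs_less_iff by linarith
  qed (use d in auto)
qed

lemma test_C1:
  fixes xb :: "'a::euclidean_space" and tb a b \<gamma> :: real
  shows "C1_on (\<lambda>p. - (a * exp (- \<gamma> * snd p) * ((xb - fst p) \<bullet> (xb - fst p)) + b * (tb - snd p)\<^sup>2)) S
     (\<lambda>p. (2 * a * exp (- \<gamma> * snd p)) *\<^sub>R (xb - fst p))
     (\<lambda>p. \<gamma> * a * exp (- \<gamma> * snd p) * ((xb - fst p) \<bullet> (xb - fst p)) + 2 * b * (tb - snd p))"
  unfolding C1_on_def
proof (intro conjI ballI)
  fix p :: "'a \<times> real" assume "p \<in> S"
  show "((\<lambda>p. - (a * exp (- \<gamma> * snd p) * ((xb - fst p) \<bullet> (xb - fst p)) + b * (tb - snd p)\<^sup>2)) has_derivative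
        (\<lambda>(h, s). (2 * a * exp (- \<gamma> * snd p)) *\<^sub>R (xb - fst p) \<bullet> h +
           (\<gamma> * a * exp (- \<gamma> * snd p) * ((xb - fst p) \<bullet> (xb - fst p)) + 2 * b * (tb - snd p)) * s)) (at p)"
    apply (rule has_derivative_eq_rhs)
     apply (rule derivative_eq_intros refl)+
    apply (auto simp: fun_eq_iff algebra_simps inner_commute power2_eq_square)
    done
qed (intro continuous_intros; simp)+

lemma norm_sq_expand:
  fixes a b c :: "'a::real_inner"
  shows "(norm (a + h *\<^sub>R b - c))\<^sup>2 = (norm (a - c))\<^sup>2 + 2 * h * ((a - c) \<bullet> b) + h\<^sup>2 * (norm b)\<^sup>2"
proof -
  have eq: "a + h *\<^sub>R b - c = (a - c) + h *\<^sub>R b" by (simp add: algebra_simps)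
  show ?thesis
    unfolding eq power2_norm_eq_inner
    by (simp add: inner_add_left inner_add_right inner_commute power2_eq_square algebra_simps)
qed

lemma quad_real:
  fixes U0 Ex N X Nb t s h k \<alpha> \<epsilon> :: real
  assumes "\<alpha> \<noteq> 0" "\<epsilon> \<noteq> 0"
  shows "U0 + Ex * (N + 2 * h * X + h\<^sup>2 * Nb) / \<epsilon>\<^sup>2 + (t + h * k - s)\<^sup>2 / \<alpha>
     = U0 + Ex * N / \<epsilon>\<^sup>2 + (t - s)\<^sup>2 / \<alpha> + h * ((2 * Ex / \<epsilon>\<^sup>2) * X + 2 * (t - s) / \<alpha> * k)
       + h\<^sup>2 * (Ex * Nb / \<epsilon>\<^sup>2 + k\<^sup>2 / \<alpha>)"
  using assms by (simp add: field_simps power2_eq_square)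

lemma amgm_aux:
  fixes a E :: real
  assumes "E > 0" "a \<ge> 0"
  shows "a \<le> (a\<^sup>2 / E + E) / 2"
proof -
  have "(a - E)\<^sup>2 \<ge> 0" by simp
  then have "2 * a * E \<le> a\<^sup>2 + E\<^sup>2" by (simp add: power2_eq_square algebra_simps)
  then show ?thesis using assms by (simp add: field_simps power2_eq_square)
qed

theorem corollary3p3:
  fixes H :: "'a::euclidean_space \<Rightarrow> real \<Rightarrow> real \<Rightarrow> 'a \<Rightarrow> real"
    and u :: "'a \<Rightarrow> real \<Rightarrow> real" and u0 :: "'a \<Rightarrow> real"
    and T C1 K3 \<beta> r \<rho> \<gamma> :: real and x0 :: 'a
  assumes T: "T > 0"
    and H_cont: "continuous_on (UNIV \<times> {0..T} \<times> UNIV \<times> UNIV) (\<lambda>(x, t, v, p). H x t v p)"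
    and u0_lip: "\<exists>L. L-lipschitz_on UNIV u0"
    and H1: "C1 \<ge> 0" "\<beta> \<in> {0, 1}"
      "\<And>x y t v p. t \<in> {0..T} \<Longrightarrow> \<bar>H x t v p - H y t v p\<bar> \<le> C1 * (\<beta> + norm p) * norm (x - y)"
    and H3: "K3 \<ge> 0"
      "\<And>x t v w p. t \<in> {0..T} \<Longrightarrow> \<bar>H x t v p - H x t w p\<bar> \<le> K3 * \<bar>v - w\<bar>"
    and H4: "\<And>x t v. t \<in> {0..T} \<Longrightarrow> convex_on UNIV (H x t v)"
    and u_cont: "continuous_on (UNIV \<times> {0..<T}) (\<lambda>(x, t). u x t)"
    and u_BJ: "BJ_solution H T u0 u"
    and rho: "0 < \<rho>" "\<rho> < r"
    and gamma: "\<gamma> \<ge> (\<beta> / 2 + 2) * C1 + K3"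
    and u_bdd: "bounded ((\<lambda>(x, t). u x t) ` (cball x0 r \<times> {0..<T}))"
  shows "\<exists>\<epsilon>0>0. \<forall>\<epsilon>. 0 < \<epsilon> \<and> \<epsilon> < \<epsilon>0 \<longrightarrow>
           visc_subsolution H (\<lambda>x t. \<beta> * C1 / 2 * exp (\<gamma> * t) * \<epsilon>\<^sup>2)
             (ball x0 (r - \<rho>) \<times> {0<..<T})
             (\<lambda>x t. INF y\<in>cball x0 r. u y t + exp (- \<gamma> * t) * (norm (x - y))\<^sup>2 / \<epsilon>\<^sup>2)"
proof -
  define B where "B = cball x0 r"
  have Bc: "compact B" and Bne: "B \<noteq> {}" using rho by (auto simp: B_def)
  obtain Mb where Mb0: "Mb \<ge> 0" and Mb: "\<And>x t. x \<in> B \<Longrightarrow> t \<in> {0..<T} \<Longrightarrow> \<bar>u x t\<bar> \<le> Mb"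
  proof -
    obtain a where "\<forall>z\<in>(\<lambda>(x, t). u x t) ` (cball x0 r \<times> {0..<T}). norm z \<le> a"
      using u_bdd by (auto simp: bounded_iff)
    then show ?thesis using that[of "max a 0"] by (force simp: B_def)
  qed
  have g0: "\<gamma> \<ge> 0" using gamma H1(1,2) H3(1) by auto
  define E where "E = exp (\<gamma> * T)"
  define \<epsilon>0 where "\<epsilon>0 = \<rho> / sqrt (2 * Mb * E + 1)"
  have E1: "E \<ge> 1" using g0 T by (simp add: E_def)
  have sq: "sqrt (2 * Mb * E + 1) > 0" using Mb0 E1 by (simp add: add_nonneg_pos)
  have e0pos: "\<epsilon>0 > 0" using rho sq by (simp add: \<epsilon>0_def)
  show ?thesis
  proof (intro exI[of _ \<epsilon>0] conjI allI impI e0pos)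
    fix \<epsilon> :: real assume eps: "0 < \<epsilon> \<and> \<epsilon> < \<epsilon>0"
    have epsrho: "2 * Mb * E * \<epsilon>\<^sup>2 < \<rho>\<^sup>2"
    proof -
      have "\<epsilon>\<^sup>2 < \<epsilon>0\<^sup>2" using eps by (simp add: power_strict_mono)
      also have "\<epsilon>0\<^sup>2 = \<rho>\<^sup>2 / (2 * Mb * E + 1)"
        using Mb0 E1 by (simp add: \<epsilon>0_def power_divide)
      finally have "(2 * Mb * E + 1) * \<epsilon>\<^sup>2 < \<rho>\<^sup>2" using Mb0 E1
        by (simp add: pos_less_divide_eq mult.commute add_nonneg_pos)
      moreover have "2 * Mb * E * \<epsilon>\<^sup>2 \<le> (2 * Mb * E + 1) * \<epsilon>\<^sup>2" by (simp add: algebra_simps)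
      ultimately show ?thesis by linarith
    qed
    define S where "S = ball x0 (r - \<rho>) \<times> {0<..<T}"
    define U where "U = (\<lambda>x t. INF y\<in>B. u y t + exp (- \<gamma> * t) * (norm (x - y))\<^sup>2 / \<epsilon>\<^sup>2)"
    have ucy: "continuous_on B (\<lambda>y. u y t + exp (- \<gamma> * t) * (norm (x - y))\<^sup>2 / \<epsilon>\<^sup>2)" if "t \<in> {0..<T}" for x t
    proof -
      have "continuous_on B (\<lambda>y. (\<lambda>(x, t). u x t) (y, t))"
        by (rule continuous_on_compose2[OF u_cont]) (use that in \<open>auto intro!: continuous_intros\<close>)
      then show ?thesis using eps by (auto intro!: continuous_intros)
    qed
    have Uatt: "\<exists>y\<in>B. U x t = u y t + exp (- \<gamma> * t) * (norm (x - y))\<^sup>2 / \<epsilon>\<^sup>2 \<and>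
        (\<forall>y'\<in>B. u y t + exp (- \<gamma> * t) * (norm (x - y))\<^sup>2 / \<epsilon>\<^sup>2 \<le> u y' t + exp (- \<gamma> * t) * (norm (x - y'))\<^sup>2 / \<epsilon>\<^sup>2)"
      if tT: "t \<in> {0..<T}" for x t
    proof -
      obtain y where y: "y \<in> B" "\<forall>y'\<in>B. u y t + exp (- \<gamma> * t) * (norm (x - y))\<^sup>2 / \<epsilon>\<^sup>2 \<le> u y' t + exp (- \<gamma> * t) * (norm (x - y'))\<^sup>2 / \<epsilon>\<^sup>2"
        using continuous_attains_inf[OF Bc Bne ucy[OF tT, of x]] by blast
      then have "U x t = u y t + exp (- \<gamma> * t) * (norm (x - y))\<^sup>2 / \<epsilon>\<^sup>2"
        unfolding U_def by (intro cInf_eq_minimum) auto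
      then show ?thesis using y by blast
    qed
    have Ule: "U x t \<le> u y t + exp (- \<gamma> * t) * (norm (x - y))\<^sup>2 / \<epsilon>\<^sup>2" if "t \<in> {0..<T}" "y \<in> B" for x y t
      using Uatt[OF that(1), of x] that(2) by auto
    have Ulow: "U x t \<ge> - Mb" if tT: "t \<in> {0..<T}" for x t
    proof -
      obtain y where "y \<in> B" "U x t = u y t + exp (- \<gamma> * t) * (norm (x - y))\<^sup>2 / \<epsilon>\<^sup>2"
        using Uatt[OF tT] by blast
      moreover have "exp (- \<gamma> * t) * (norm (x - y))\<^sup>2 / \<epsilon>\<^sup>2 \<ge> 0" by simp
      moreover have "\<bar>u y t\<bar> \<le> Mb" using Mb[of y t] tT \<open>y \<in> B\<close> by auto
      ultimately show ?thesis unfolding abs_le_iff by linarith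
    qed
    have Uup: "U x t \<le> Mb" if "x \<in> B" "t \<in> {0..<T}" for x t
      using Ule[OF that(2) that(1), of x] Mb[OF that] by simp
    show "visc_subsolution H (\<lambda>x t. \<beta> * C1 / 2 * exp (\<gamma> * t) * \<epsilon>\<^sup>2)
             (ball x0 (r - \<rho>) \<times> {0<..<T})
             (\<lambda>x t. INF y\<in>cball x0 r. u y t + exp (- \<gamma> * t) * (norm (x - y))\<^sup>2 / \<epsilon>\<^sup>2)"
      unfolding visc_subsolution_def
    proof (intro allI impI)
      fix \<phi> Dx Dt xh th
      assume C1phi: "C1_on \<phi> (ball x0 (r - \<rho>) \<times> {0<..<T}) Dx Dt"
        and zS: "(xh, th) \<in> ball x0 (r - \<rho>) \<times> {0<..<T}"
        and lmax: "local_max_at (\<lambda>(y, s). (\<lambda>x t. INF y\<in>cball x0 r. u y t + exp (- \<gamma> * t) * (norm (x - y))\<^sup>2 / \<epsilon>\<^sup>2) y s - \<phi> (y, s))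
           (ball x0 (r - \<rho>) \<times> {0<..<T}) (xh, th)"
      define zh where "zh = (xh, th)"
      have C1phi': "C1_on \<phi> S Dx Dt" using C1phi by (simp add: S_def)
      have zhS: "zh \<in> S" using zS by (simp add: S_def zh_def)
      obtain e0 where e0pos: "e0 > 0" and e0H: "\<forall>q\<in>ball (xh, th) e0 \<inter> (ball x0 (r - \<rho>) \<times> {0<..<T}).
          (\<lambda>(y, s). (\<lambda>x t. INF y\<in>cball x0 r. u y t + exp (- \<gamma> * t) * (norm (x - y))\<^sup>2 / \<epsilon>\<^sup>2) y s - \<phi> (y, s)) q
          \<le> (\<lambda>(y, s). (\<lambda>x t. INF y\<in>cball x0 r. u y t + exp (- \<gamma> * t) * (norm (x - y))\<^sup>2 / \<epsilon>\<^sup>2) y s - \<phi> (y, s)) (xh, th)"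
        using lmax unfolding local_max_at_def by blast
      have e0: "U (fst q) (snd q) - \<phi> q \<le> U xh th - \<phi> zh" if "q \<in> ball zh e0 \<inter> S" for q
        using e0H[rule_format, of q] that by (cases q) (simp add: U_def B_def S_def zh_def)
      have main: "Dt zh + H xh th (U xh th) (Dx zh) \<le> \<beta> * C1 / 2 * exp (\<gamma> * th) * \<epsilon>\<^sup>2"
      proof (rule ccontr)
        assume nle: "\<not> Dt zh + H xh th (U xh th) (Dx zh) \<le> \<beta> * C1 / 2 * exp (\<gamma> * th) * \<epsilon>\<^sup>2"
        define g0 where "g0 = \<beta> * C1 / 2 * exp (\<gamma> * th) * \<epsilon>\<^sup>2"
        define \<Theta> where "\<Theta> = Dt zh + H xh th (U xh th) (Dx zh) - g0"
        have \<Theta>: "\<Theta> > 0" using nle by (simp add: \<Theta>_def g0_def)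
        define \<eta>1 where "\<eta>1 = \<Theta> / (K3 + 4)"
        have \<eta>1: "\<eta>1 > 0" using \<Theta> H3(1) by (simp add: \<eta>1_def)
        have \<eta>1\<Theta>: "(3 + K3) * \<eta>1 < \<Theta>"
        proof -
          have "(3 + K3) * \<eta>1 = \<Theta> * ((3 + K3) / (K3 + 4))" by (simp add: \<eta>1_def)
          also have "\<dots> < \<Theta> * 1" using \<Theta> H3(1) by (intro mult_strict_left_mono) auto
          finally show ?thesis by simp
        qed
        have Sopen: "open S" by (simp add: S_def open_Times)
        obtain \<delta>0 where \<delta>0: "\<delta>0 > 0" "\<delta>0 < e0" "cball zh \<delta>0 \<subseteq> S"
        proof -
          obtain d where d: "d > 0" "cball zh d \<subseteq> S" using Sopen zhS open_contains_cball by blast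
          have "cball zh (min d (e0/2)) \<subseteq> cball zh d" by auto
          then show ?thesis using that[of "min d (e0/2)"] e0pos d by auto
        qed
        define I where "I = {th - \<delta>0 .. th + \<delta>0}"
        have Ic: "compact I" and Ine: "I \<noteq> {}" using \<delta>0 by (auto simp: I_def)
        have distx: "dist (x, t) (x, s) = \<bar>t - s\<bar>" for x :: 'a and t s :: real
          by (simp add: dist_Pair_Pair dist_real_def)
        have dsnd: "\<bar>snd z - snd z'\<bar> \<le> dist z z'" and dfst: "dist (fst z) (fst z') \<le> dist z z'" for z z' :: "'a \<times> real"
          by (cases z; cases z'; simp add: dist_Pair_Pair dist_real_def)+
        have IT: "t \<in> {0<..<T}" if "t \<in> I" for t
        proof -
          have "(xh, t) \<in> cball zh \<delta>0" using that by (auto simp: I_def zh_def dist_commute distx)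
          then show ?thesis using \<delta>0(3) by (auto simp: S_def)
        qed
        have IT': "t \<in> {0..<T}" "t \<in> {0..T}" if "t \<in> I" for t using IT[OF that] by auto
        have Bsub: "ball x0 (r - \<rho>) \<subseteq> B" using rho by (auto simp: B_def)
        have KS: "fst z \<in> ball x0 (r - \<rho>)" "snd z \<in> I" "z \<in> S" if "z \<in> cball zh \<delta>0" for z
        proof -
          show "z \<in> S" using that \<delta>0 by auto
          then show "fst z \<in> ball x0 (r - \<rho>)" by (auto simp: S_def)
          have "\<bar>snd z - th\<bar> \<le> \<delta>0" using dsnd[of z zh] that by (auto simp: zh_def dist_commute)
          then show "snd z \<in> I" by (auto simp: I_def)
        qed
        have xhB: "xh \<in> B" and thI: "th \<in> I" using zhS Bsub \<delta>0 by (auto simp: S_def zh_def I_def)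
        have UUC: "uniformly_continuous_on (B \<times> I) (\<lambda>z. U (fst z) (snd z))"
        proof -
          have c1: "continuous_on ((B \<times> I) \<times> B) (\<lambda>p. u (snd p) (snd (fst p)))"
          proof -
            have "continuous_on ((B \<times> I) \<times> B) (\<lambda>p. (\<lambda>(x, t). u x t) ((\<lambda>p. (snd p, snd (fst p))) p))"
              by (rule continuous_on_compose2[OF u_cont]) (auto intro!: continuous_intros dest: IT')
            then show ?thesis by simp
          qed
          have "continuous_on ((B \<times> I) \<times> B) (\<lambda>p. u (snd p) (snd (fst p)) + exp (- \<gamma> * snd (fst p)) * (norm (fst (fst p) - snd p))\<^sup>2 / \<epsilon>\<^sup>2)"
            using eps by (intro continuous_intros c1) auto
          then have "uniformly_continuous_on ((B \<times> I) \<times> B) (\<lambda>(z, y). u y (snd z) + exp (- \<gamma> * snd z) * (norm (fst z - y))\<^sup>2 / \<epsilon>\<^sup>2)"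
            unfolding case_prod_unfold using Bc Ic by (intro compact_uniformly_continuous compact_Times) auto
          from unif_inf[OF Bc Bne this] show ?thesis by (simp add: U_def)
        qed
        have UCe: "\<exists>d>0. \<forall>z\<in>B \<times> I. \<forall>z'\<in>B \<times> I. dist z' z < d \<longrightarrow> \<bar>U (fst z') (snd z') - U (fst z) (snd z)\<bar> < e" if "e > 0" for e
          using UUC[unfolded uniformly_continuous_on_def, rule_format, OF that] by (simp add: dist_real_def)
        define R where "R = 2 * \<rho> / \<epsilon>\<^sup>2"
        define Hs where "Hs = B \<times> I \<times> cball (0::real) Mb \<times> cball (0::'a) R"
        have HUC: "uniformly_continuous_on Hs (\<lambda>(x, t, v, p). H x t v p)"
        proof -
          have "Hs \<subseteq> UNIV \<times> {0..T} \<times> UNIV \<times> UNIV" using IT' by (auto simp: Hs_def)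
          then have "continuous_on Hs (\<lambda>(x, t, v, p). H x t v p)" using continuous_on_subset[OF H_cont] by blast
          moreover have "compact Hs" unfolding Hs_def using Bc Ic by (intro compact_Times) auto
          ultimately show ?thesis by (intro compact_uniformly_continuous)
        qed
        obtain \<delta>H where \<delta>H: "\<delta>H > 0" "\<And>x t s v p. x \<in> B \<Longrightarrow> t \<in> I \<Longrightarrow> s \<in> I \<Longrightarrow> \<bar>v\<bar> \<le> Mb \<Longrightarrow> norm p \<le> R \<Longrightarrow>
            \<bar>t - s\<bar> < \<delta>H \<Longrightarrow> \<bar>H x t v p - H x s v p\<bar> < \<eta>1"
        proof -
          obtain d where d: "d > 0" "\<forall>q\<in>Hs. \<forall>q'\<in>Hs. dist q' q < d \<longrightarrow> dist ((\<lambda>(x, t, v, p). H x t v p) q') ((\<lambda>(x, t, v, p). H x t v p) q) < \<eta>1"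
            using HUC[unfolded uniformly_continuous_on_def, rule_format, OF \<eta>1] by blast
          show ?thesis
          proof (rule that[OF d(1)])
            fix x :: 'a and t s v :: real and p :: 'a assume a: "x \<in> B" "t \<in> I" "s \<in> I" "\<bar>v\<bar> \<le> Mb" "norm p \<le> R" "\<bar>t - s\<bar> < d"
            have "(x, s, v, p) \<in> Hs" "(x, t, v, p) \<in> Hs" using a by (auto simp: Hs_def)
            moreover have "dist (x, t, v, p) (x, s, v, p) < d" using a by (simp add: dist_Pair_Pair dist_real_def)
            ultimately show "\<bar>H x t v p - H x s v p\<bar> < \<eta>1" using d(2) by (force simp: dist_real_def)
          qed
        qed
        obtain \<delta>u where \<delta>u: "\<delta>u > 0" "\<And>x t s. x \<in> B \<Longrightarrow> t \<in> I \<Longrightarrow> s \<in> I \<Longrightarrow> \<bar>t - s\<bar> < \<delta>u \<Longrightarrow> \<bar>U x t - U x s\<bar> < \<eta>1"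
        proof -
          obtain d where d: "d > 0" "\<forall>z\<in>B \<times> I. \<forall>z'\<in>B \<times> I. dist z' z < d \<longrightarrow> \<bar>U (fst z') (snd z') - U (fst z) (snd z)\<bar> < \<eta>1"
            using UCe[OF \<eta>1] by blast
          show ?thesis
          proof (rule that[OF d(1)])
            fix x t s assume a: "x \<in> B" "t \<in> I" "s \<in> I" "\<bar>t - s\<bar> < d"
            then show "\<bar>U x t - U x s\<bar> < \<eta>1" using d(2)[rule_format, of "(x, s)" "(x, t)"] by (simp add: distx)
          qed
        qed
        obtain \<delta>g where \<delta>g: "\<delta>g > 0" "\<And>s. \<bar>s - th\<bar> < \<delta>g \<Longrightarrow> \<beta> * C1 / 2 * exp (\<gamma> * s) * \<epsilon>\<^sup>2 < g0 + \<eta>1"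
        proof -
          have "continuous_on UNIV (\<lambda>s. \<beta> * C1 / 2 * exp (\<gamma> * s) * \<epsilon>\<^sup>2)" by (intro continuous_intros)
          then obtain d where "d > 0" "\<forall>s\<in>UNIV. dist s th < d \<longrightarrow> dist (\<beta> * C1 / 2 * exp (\<gamma> * s) * \<epsilon>\<^sup>2) (\<beta> * C1 / 2 * exp (\<gamma> * th) * \<epsilon>\<^sup>2) < \<eta>1"
            unfolding continuous_on_iff using \<eta>1 by blast
          then show ?thesis using that[of d] by (force simp: dist_real_def g0_def)
        qed
        define \<Lambda> where "\<Lambda> = (\<lambda>z v. Dt z + 2 * (snd z - th) + H (fst z) (snd z) v (Dx z + 2 *\<^sub>R (fst z - xh)))"
        obtain \<kappa> where \<kappa>: "\<kappa> > 0" "\<And>z v. z \<in> S \<Longrightarrow> dist z zh < \<kappa> \<Longrightarrow> \<bar>v - U xh th\<bar> < \<kappa> \<Longrightarrow> \<Lambda> z v > \<Lambda> zh (U xh th) - \<eta>1"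
        proof -
          have DxC: "continuous_on S Dx" and DtC: "continuous_on S Dt" using C1phi' by (auto simp: C1_on_def)
          have c1: "continuous_on (S \<times> UNIV) (\<lambda>p. Dx (fst p))"
            by (rule continuous_on_compose2[OF DxC]) (auto intro!: continuous_intros)
          have c2: "continuous_on (S \<times> UNIV) (\<lambda>p. Dt (fst p))"
            by (rule continuous_on_compose2[OF DtC]) (auto intro!: continuous_intros)
          have c3: "continuous_on (S \<times> UNIV) (\<lambda>p. (\<lambda>(x, t, v, p). H x t v p) (fst (fst p), snd (fst p), snd p, Dx (fst p) + 2 *\<^sub>R (fst (fst p) - xh)))"
            apply (rule continuous_on_compose2[OF H_cont])
             apply (auto intro!: continuous_intros c1)[1]
            apply (auto simp: S_def)
            done
          have eqL: "(\<lambda>p. \<Lambda> (fst p) (snd p)) = (\<lambda>p. (Dt (fst p) + 2 * (snd (fst p) - th)) + (\<lambda>(x, t, v, p). H x t v p) (fst (fst p), snd (fst p), snd p, Dx (fst p) + 2 *\<^sub>R (fst (fst p) - xh)))"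
            by (simp add: \<Lambda>_def fun_eq_iff)
          have LC: "continuous_on (S \<times> UNIV) (\<lambda>p. \<Lambda> (fst p) (snd p))"
            unfolding eqL by (intro continuous_on_add c2 c3 continuous_on_mult continuous_on_diff continuous_on_const continuous_on_snd continuous_on_fst continuous_on_id)
          have zU: "(zh, U xh th) \<in> S \<times> UNIV" using zhS by simp
          obtain d where d: "d > 0" "\<forall>p'\<in>S \<times> UNIV. dist p' (zh, U xh th) < d \<longrightarrow> dist (\<Lambda> (fst p') (snd p')) (\<Lambda> zh (U xh th)) < \<eta>1"
            using LC[unfolded continuous_on_iff, rule_format, OF zU \<eta>1] by auto
          show ?thesis
          proof (rule that[of "d/2"])
            fix z v assume a: "z \<in> S" "dist z zh < d / 2" "\<bar>v - U xh th\<bar> < d / 2"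
            have "dist (z, v) (zh, U xh th) < d"
              unfolding dist_Pair_Pair using a by (intro sqrt_sum_squares_half_less) (auto simp: dist_real_def)
            then show "\<Lambda> z v > \<Lambda> zh (U xh th) - \<eta>1" using d(2) a(1) by (force simp: dist_real_def)
          qed (use d in auto)
        qed
        have phiC: "continuous_on S \<phi>"
        proof -
          have "\<forall>p\<in>S. (\<phi> has_derivative (\<lambda>(h, s). Dx p \<bullet> h + Dt p * s)) (at p)" using C1phi' by (simp add: C1_on_def)
          then show ?thesis
            by (intro has_derivative_continuous_on[of S \<phi> "\<lambda>p. \<lambda>(h, s). Dx p \<bullet> h + Dt p * s"]) (simp add: has_derivative_at_withinI)
        qed
        obtain \<kappa>\<phi> where \<kappa>\<phi>: "\<kappa>\<phi> > 0" "\<And>z. z \<in> S \<Longrightarrow> dist z zh < \<kappa>\<phi> \<Longrightarrow> \<bar>\<phi> z - \<phi> zh\<bar> < \<kappa> / 4"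
        proof -
          have k4: "\<kappa> / 4 > 0" using \<kappa>(1) by simp
          obtain d where d: "d > 0" "\<forall>z\<in>S. dist z zh < d \<longrightarrow> dist (\<phi> z) (\<phi> zh) < \<kappa> / 4"
            using phiC[unfolded continuous_on_iff, rule_format, OF zhS k4] by blast
          show ?thesis
          proof (rule that[OF d(1)])
            fix z assume "z \<in> S" "dist z zh < d"
            then show "\<bar>\<phi> z - \<phi> zh\<bar> < \<kappa> / 4" using d(2) by (simp add: dist_real_def)
          qed
        qed
        obtain \<kappa>u where \<kappa>u: "\<kappa>u > 0" "\<And>z. z \<in> B \<times> I \<Longrightarrow> dist z zh < \<kappa>u \<Longrightarrow> \<bar>U (fst z) (snd z) - U xh th\<bar> < \<kappa> / 4"
        proof -
          have k4: "\<kappa> / 4 > 0" using \<kappa>(1) by simp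
          obtain d where d: "d > 0" "\<forall>z\<in>B \<times> I. \<forall>z'\<in>B \<times> I. dist z' z < d \<longrightarrow> \<bar>U (fst z') (snd z') - U (fst z) (snd z)\<bar> < \<kappa> / 4"
            using UCe[OF k4] by blast
          have zhBI: "zh \<in> B \<times> I" using xhB thI by (simp add: zh_def)
          show ?thesis
          proof (rule that[OF d(1)])
            fix z assume "z \<in> B \<times> I" "dist z zh < d"
            then show "\<bar>U (fst z) (snd z) - U xh th\<bar> < \<kappa> / 4" using d(2) zhBI by (auto simp: zh_def)
          qed
        qed
        define \<delta>' where "\<delta>' = Min {\<delta>u, \<delta>H, \<delta>0 / 2, \<delta>g / 2}"
        have \<delta>': "\<delta>' > 0" "\<delta>' \<le> \<delta>u" "\<delta>' \<le> \<delta>H" "\<delta>' \<le> \<delta>0 / 2" "\<delta>' \<le> \<delta>g / 2"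
          using \<delta>u(1) \<delta>H(1) \<delta>0(1) \<delta>g(1) by (auto simp: \<delta>'_def)
        define \<kappa>' where "\<kappa>' = Min {\<kappa>, \<kappa>\<phi>, \<kappa>u, \<delta>0 / 2, \<delta>g / 2}"
        have \<kappa>': "\<kappa>' > 0" "\<kappa>' \<le> \<kappa>" "\<kappa>' \<le> \<kappa>\<phi>" "\<kappa>' \<le> \<kappa>u" "\<kappa>' \<le> \<delta>0 / 2" "\<kappa>' \<le> \<delta>g / 2"
          using \<kappa>(1) \<kappa>\<phi>(1) \<kappa>u(1) \<delta>0(1) \<delta>g(1) by (auto simp: \<kappa>'_def)
        define \<eta>2 where "\<eta>2 = min (\<kappa>'\<^sup>2 / 2) (\<kappa> / 4)"
        have \<eta>2: "\<eta>2 > 0" "\<eta>2 \<le> \<kappa>'\<^sup>2 / 2" "\<eta>2 \<le> \<kappa> / 4" using \<kappa>'(1) \<kappa>(1) by (auto simp: \<eta>2_def)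
        obtain d\<eta> where d\<eta>: "d\<eta> > 0" "\<And>s. s \<in> I \<Longrightarrow> \<bar>s - th\<bar> < d\<eta> \<Longrightarrow> U xh s > U xh th - \<eta>2"
        proof -
          obtain d where d: "d > 0" "\<forall>z\<in>B \<times> I. \<forall>z'\<in>B \<times> I. dist z' z < d \<longrightarrow> \<bar>U (fst z') (snd z') - U (fst z) (snd z)\<bar> < \<eta>2"
            using UCe[OF \<eta>2(1)] by blast
          show ?thesis
          proof (rule that[OF d(1)])
            fix s assume "s \<in> I" "\<bar>s - th\<bar> < d"
            then have "\<bar>U xh s - U xh th\<bar> < \<eta>2" using d(2)[rule_format, of "(xh, th)" "(xh, s)"] xhB thI by (simp add: distx)
            then show "U xh s > U xh th - \<eta>2" by linarith
          qed
        qed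
        define \<alpha> where "\<alpha> = min (d\<eta>\<^sup>2) (\<delta>'\<^sup>2) / (2 * (2 * Mb + 1))"
        have \<alpha>: "\<alpha> > 0" using d\<eta> \<delta>' Mb0 by (simp add: \<alpha>_def add_nonneg_pos)
        have \<alpha>1: "(2 * Mb + 1) * \<alpha> < d\<eta>\<^sup>2" and \<alpha>2: "2 * Mb * \<alpha> < \<delta>'\<^sup>2"
        proof -
          have m: "min (d\<eta>\<^sup>2) (\<delta>'\<^sup>2) > 0" using d\<eta> \<delta>' by simp
          have e: "(2 * Mb + 1) * \<alpha> = min (d\<eta>\<^sup>2) (\<delta>'\<^sup>2) / 2" using Mb0 by (simp add: \<alpha>_def field_simps)
          show "(2 * Mb + 1) * \<alpha> < d\<eta>\<^sup>2" using e m by linarith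
          have "2 * Mb * \<alpha> \<le> (2 * Mb + 1) * \<alpha>" using \<alpha> by (simp add: algebra_simps)
          then show "2 * Mb * \<alpha> < \<delta>'\<^sup>2" using e m by linarith
        qed
        have \<alpha>ne: "\<alpha> \<noteq> 0" and \<epsilon>ne: "\<epsilon> \<noteq> 0" using \<alpha> eps by auto
        define M where "M = B \<times> I"
        have Mc: "compact M" and Mne: "M \<noteq> {}" using Bc Ic Bne Ine by (auto simp: M_def intro: compact_Times)
        define f where "f = (\<lambda>(z::'a \<times> real) (m::'a \<times> real). u (fst m) (snd m) + exp (- \<gamma> * snd m) * (norm (fst z - fst m))\<^sup>2 / \<epsilon>\<^sup>2 + (snd z - snd m)\<^sup>2 / \<alpha>)"
        define W where "W = (\<lambda>z. Inf (f z ` M))"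
        have uM: "continuous_on M (\<lambda>m. u (fst m) (snd m))"
        proof -
          have "continuous_on M (\<lambda>m. (\<lambda>(x, t). u x t) ((\<lambda>m. (fst m, snd m)) m))"
            by (rule continuous_on_compose2[OF u_cont]) (auto intro!: continuous_intros simp: M_def dest: IT')
          then show ?thesis by (simp add: case_prod_unfold)
        qed
        have fc: "continuous_on M (f z)" for z
        proof -
          have "continuous_on M (\<lambda>m. u (fst m) (snd m) + exp (- \<gamma> * snd m) * (norm (fst z - fst m))\<^sup>2 / \<epsilon>\<^sup>2 + (snd z - snd m)\<^sup>2 / \<alpha>)"
            using \<alpha>ne \<epsilon>ne by (intro continuous_intros uM) auto
          then show ?thesis by (simp add: f_def)
        qed
        have fmin: "\<exists>m\<in>M. W z = f z m \<and> (\<forall>m'\<in>M. f z m \<le> f z m')" for z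
        proof -
          obtain m where m: "m \<in> M" "\<forall>m'\<in>M. f z m \<le> f z m'" using continuous_attains_inf[OF Mc Mne fc] by blast
          then have "W z = f z m" unfolding W_def by (intro cInf_eq_minimum) auto
          then show ?thesis using m by blast
        qed
        have Wle: "W z \<le> f z m" if "m \<in> M" for z m
          using fmin[of z] that by auto
        have WleU: "W z \<le> U (fst z) (snd z)" if szI: "snd z \<in> I" for z
        proof -
          obtain y where y: "y \<in> B" "U (fst z) (snd z) = u y (snd z) + exp (- \<gamma> * snd z) * (norm (fst z - y))\<^sup>2 / \<epsilon>\<^sup>2"
            using Uatt[OF IT'(1)[OF szI]] by blast
          have "(y, snd z) \<in> M" using y szI by (simp add: M_def)
          from Wle[OF this, of z] y show ?thesis by (simp add: f_def)
        qed
        have fge: "f z m \<ge> U (fst z) (snd m) + (snd z - snd m)\<^sup>2 / \<alpha>" if "m \<in> M" for z m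
        proof -
          have "snd m \<in> I" "fst m \<in> B" using that by (auto simp: M_def)
          then have "U (fst z) (snd m) \<le> u (fst m) (snd m) + exp (- \<gamma> * snd m) * (norm (fst z - fst m))\<^sup>2 / \<epsilon>\<^sup>2"
            using Ule IT' by blast
          then show ?thesis by (simp add: f_def)
        qed
        have Wzh: "W zh \<ge> U xh th - \<eta>2"
        proof -
          obtain m where m: "m \<in> M" "W zh = f zh m" using fmin by blast
          have sI: "snd m \<in> I" using m by (auto simp: M_def)
          have fz: "f zh m \<ge> U xh (snd m) + (th - snd m)\<^sup>2 / \<alpha>" using fge[OF m(1), of zh] by (simp add: zh_def)
          show ?thesis
          proof (cases "\<bar>snd m - th\<bar> < d\<eta>")
            case True
            then have "U xh (snd m) > U xh th - \<eta>2" using d\<eta>(2) sI by blast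
            moreover have "(th - snd m)\<^sup>2 / \<alpha> \<ge> 0" using \<alpha> by simp
            ultimately show ?thesis using fz m(2) by linarith
          next
            case False
            then have "d\<eta>\<^sup>2 \<le> \<bar>snd m - th\<bar>\<^sup>2" using d\<eta>(1) by (intro power_mono) auto
            also have "\<bar>snd m - th\<bar>\<^sup>2 = (th - snd m)\<^sup>2" by (simp add: power2_eq_square algebra_simps)
            finally have a: "d\<eta>\<^sup>2 \<le> (th - snd m)\<^sup>2" .
            have "2 * Mb + 1 < d\<eta>\<^sup>2 / \<alpha>" using \<alpha>1 \<alpha> by (simp add: pos_less_divide_eq)
            also have "\<dots> \<le> (th - snd m)\<^sup>2 / \<alpha>" using a \<alpha> by (simp add: divide_right_mono)
            finally have b: "2 * Mb + 1 < (th - snd m)\<^sup>2 / \<alpha>" .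
            have "U xh (snd m) \<ge> - Mb" using Ulow IT' sI by blast
            moreover have "U xh th \<le> Mb" using Uup xhB IT' thI by blast
            ultimately show ?thesis using fz m(2) b \<eta>2(1) by linarith
          qed
        qed
        define \<phi>t where "\<phi>t = (\<lambda>z. \<phi> z + (z - zh) \<bullet> (z - zh))"
        have WcK: "continuous_on (cball zh \<delta>0) W"
        proof -
          have c1: "continuous_on (cball zh \<delta>0 \<times> M) (\<lambda>p. u (fst (snd p)) (snd (snd p)))"
          proof -
            have "continuous_on (cball zh \<delta>0 \<times> M) (\<lambda>p. (\<lambda>(x, t). u x t) ((\<lambda>p. (fst (snd p), snd (snd p))) p))"
              by (rule continuous_on_compose2[OF u_cont]) (auto intro!: continuous_intros simp: M_def dest: IT')
            then show ?thesis by (simp add: case_prod_unfold)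
          qed
          have "continuous_on (cball zh \<delta>0 \<times> M) (\<lambda>p. u (fst (snd p)) (snd (snd p)) + exp (- \<gamma> * snd (snd p)) * (norm (fst (fst p) - fst (snd p)))\<^sup>2 / \<epsilon>\<^sup>2 + (snd (fst p) - snd (snd p))\<^sup>2 / \<alpha>)"
            using \<alpha>ne \<epsilon>ne by (intro continuous_intros c1) auto
          then have "uniformly_continuous_on (cball zh \<delta>0 \<times> M) (\<lambda>(z, m). f z m)"
            unfolding case_prod_unfold f_def using Mc by (intro compact_uniformly_continuous compact_Times compact_cball) auto
          from unif_inf[OF Mc Mne this] show ?thesis unfolding W_def by (rule uniformly_continuous_imp_continuous)
        qed
        have \<phi>tC: "continuous_on (cball zh \<delta>0) \<phi>t"
          unfolding \<phi>t_def using continuous_on_subset[OF phiC \<delta>0(3)] by (intro continuous_intros) auto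
        obtain za where za: "za \<in> cball zh \<delta>0" "\<forall>z\<in>cball zh \<delta>0. W z - \<phi>t z \<le> W za - \<phi>t za"
          using continuous_attains_sup[OF compact_cball _ continuous_on_diff[OF WcK \<phi>tC]] \<delta>0(1) by auto
        obtain xa ta where zaeq: "za = (xa, ta)" by (cases za)
        have xaS: "xa \<in> ball x0 (r - \<rho>)" and taI: "ta \<in> I" and zaS: "za \<in> S" using KS[OF za(1)] zaeq by auto
        have xaB: "xa \<in> B" using xaS Bsub by auto
        have dsq: "(norm (za - zh))\<^sup>2 \<le> U xh th - W zh"
        proof -
          have "zh \<in> cball zh \<delta>0" using \<delta>0 by simp
          then have a: "W za - \<phi>t za \<ge> W zh - \<phi>t zh" using za by blast
          have b: "\<phi>t zh = \<phi> zh" by (simp add: \<phi>t_def)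
          have c: "W za \<le> U (fst za) (snd za)" using WleU[of za] taI zaeq by simp
          have "za \<in> ball zh e0 \<inter> S" using za(1) \<delta>0 zaS by (auto simp: dist_commute)
          then have d: "U (fst za) (snd za) - \<phi> za \<le> U xh th - \<phi> zh" using e0 by blast
          have e: "\<phi>t za = \<phi> za + (norm (za - zh))\<^sup>2" by (simp add: \<phi>t_def power2_norm_eq_inner)
          from a b c d e show ?thesis by linarith
        qed
        have dza: "dist za zh < \<kappa>'"
        proof -
          have k2: "\<kappa>'\<^sup>2 > 0" using \<kappa>'(1) by simp
          have "(norm (za - zh))\<^sup>2 < \<kappa>'\<^sup>2" using dsq Wzh \<eta>2(2) k2 by linarith
          then have "norm (za - zh) < \<kappa>'" by (rule power_less_imp_less_base) (use \<kappa>'(1) in linarith)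
          then show ?thesis by (simp add: dist_norm)
        qed
        have Wzab: "\<bar>W za - U xh th\<bar> < \<kappa>"
        proof -
          have zaBI: "za \<in> B \<times> I" using xaB taI zaeq by simp
          have "dist za zh < \<kappa>u" using dza \<kappa>'(4) by linarith
          from \<kappa>u(2)[OF zaBI this] have a: "U (fst za) (snd za) < U xh th + \<kappa> / 4" by linarith
          have b: "W za \<le> U (fst za) (snd za)" using WleU[of za] taI zaeq by simp
          have "zh \<in> cball zh \<delta>0" using \<delta>0 by simp
          then have c: "W za - \<phi>t za \<ge> W zh - \<phi>t zh" using za by blast
          have "dist za zh < \<kappa>\<phi>" using dza \<kappa>'(3) by linarith
          from \<kappa>\<phi>(2)[OF zaS this] have d: "\<bar>\<phi> za - \<phi> zh\<bar> < \<kappa> / 4" .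
          have e: "\<phi>t za = \<phi> za + (norm (za - zh))\<^sup>2" "\<phi>t zh = \<phi> zh" by (simp_all add: \<phi>t_def power2_norm_eq_inner)
          have f: "(norm (za - zh))\<^sup>2 \<ge> 0" by simp
          from a b c d e f Wzh \<eta>2 show ?thesis unfolding abs_less_iff by linarith
        qed
        have taT: "ta \<in> {0..T}" using IT'(2)[OF taI] .
        define gg where "gg = (\<lambda>m::'a \<times> real. ((2 * exp (- \<gamma> * snd m) / \<epsilon>\<^sup>2) *\<^sub>R (xa - fst m), 2 * (ta - snd m) / \<alpha>))"
        define Qf where "Qf = (\<lambda>(m::'a \<times> real) (e::'a \<times> real). exp (- \<gamma> * snd m) * (norm (fst e))\<^sup>2 / \<epsilon>\<^sup>2 + (snd e)\<^sup>2 / \<alpha>)"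
        define \<Gamma> where "\<Gamma> = g0 + (2 + K3) * \<eta>1"
        define Cs where "Cs = {P :: 'a \<times> real. snd P + H xa ta (W za) (fst P) \<le> \<Gamma>}"
        define G where "G = (Dx za + 2 *\<^sub>R (xa - xh), Dt za + 2 * (ta - th))"
        have ggc: "continuous_on M gg" unfolding gg_def using \<alpha>ne \<epsilon>ne by (intro continuous_intros) auto
        have quad: "f (za + h *\<^sub>R e) m = f za m + h * (gg m \<bullet> e) + h\<^sup>2 * Qf m e" if "m \<in> M" for m h e
        proof -
          obtain e1 e2 where e: "e = (e1, e2)" by (cases e)
          have "f (za + h *\<^sub>R e) m = u (fst m) (snd m) + exp (- \<gamma> * snd m) * ((norm (xa - fst m))\<^sup>2 + 2 * h * ((xa - fst m) \<bullet> e1) + h\<^sup>2 * (norm e1)\<^sup>2) / \<epsilon>\<^sup>2 + (ta + h * e2 - snd m)\<^sup>2 / \<alpha>"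
            by (simp add: f_def zaeq e norm_sq_expand)
          also have "\<dots> = u (fst m) (snd m) + exp (- \<gamma> * snd m) * (norm (xa - fst m))\<^sup>2 / \<epsilon>\<^sup>2 + (ta - snd m)\<^sup>2 / \<alpha>
              + h * ((2 * exp (- \<gamma> * snd m) / \<epsilon>\<^sup>2) * ((xa - fst m) \<bullet> e1) + 2 * (ta - snd m) / \<alpha> * e2)
              + h\<^sup>2 * (exp (- \<gamma> * snd m) * (norm e1)\<^sup>2 / \<epsilon>\<^sup>2 + e2\<^sup>2 / \<alpha>)"
            by (rule quad_real[OF \<alpha>ne \<epsilon>ne])
          also have "\<dots> = f za m + h * (gg m \<bullet> e) + h\<^sup>2 * Qf m e"
            by (simp add: f_def gg_def Qf_def zaeq e)
          finally show ?thesis .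
        qed
        have Qb: "\<exists>Bq. \<forall>m\<in>M. 0 \<le> Qf m e \<and> Qf m e \<le> Bq" for e
        proof (intro exI[of _ "(norm (fst e))\<^sup>2 / \<epsilon>\<^sup>2 + (snd e)\<^sup>2 / \<alpha>"] ballI conjI)
          fix m assume "m \<in> M"
          then have "snd m > 0" using IT by (auto simp: M_def)
          then have ex1: "exp (- \<gamma> * snd m) \<le> 1" using g0 by simp
          have a: "exp (- \<gamma> * snd m) * (norm (fst e))\<^sup>2 / \<epsilon>\<^sup>2 \<le> (norm (fst e))\<^sup>2 / \<epsilon>\<^sup>2"
            using ex1 by (intro divide_right_mono mult_left_le_one_le) auto
          have b: "(snd e)\<^sup>2 / \<alpha> \<ge> 0" using \<alpha> by simp
          show "0 \<le> Qf m e" using b by (simp add: Qf_def)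
          show "Qf m e \<le> (norm (fst e))\<^sup>2 / \<epsilon>\<^sup>2 + (snd e)\<^sup>2 / \<alpha>" using a by (simp add: Qf_def)
        qed
        define \<delta>2 where "\<delta>2 = \<delta>0 / 2"
        have \<delta>2: "\<delta>2 > 0" using \<delta>0 by (simp add: \<delta>2_def)
        have mx: "Inf (f z ` M) - \<phi>t z \<le> Inf (f za ` M) - \<phi>t za" if "dist z za < \<delta>2" for z
        proof -
          have "dist z zh \<le> dist z za + dist za zh" by (rule dist_triangle)
          then have "z \<in> cball zh \<delta>0" using that dza \<kappa>'(5) by (simp add: dist_commute \<delta>2_def)
          then show ?thesis using za(2) by (simp add: W_def)
        qed
        have der: "(\<phi>t has_derivative (\<lambda>h. G \<bullet> h)) (at za)"
        proof -
          have d1: "(\<phi> has_derivative (\<lambda>(h, s). Dx za \<bullet> h + Dt za * s)) (at za)" using C1phi' zaS by (simp add: C1_on_def)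
          show ?thesis
            unfolding \<phi>t_def
            apply (rule has_derivative_eq_rhs)
             apply (rule derivative_eq_intros d1 refl)+
            apply (auto simp: fun_eq_iff G_def zaeq zh_def inner_commute algebra_simps split: prod.splits)
            done
        qed
        have Ccl: "closed Cs"
        proof -
          have "continuous_on UNIV (\<lambda>P::'a \<times> real. (\<lambda>(x, t, v, p). H x t v p) ((\<lambda>P. (xa, ta, W za, fst P)) P))"
            by (rule continuous_on_compose2[OF H_cont]) (use taT in \<open>auto intro!: continuous_intros\<close>)
          then have "continuous_on UNIV (\<lambda>P::'a \<times> real. snd P + H xa ta (W za) (fst P))"
            by (auto intro!: continuous_intros)
          then show ?thesis unfolding Cs_def
            by (intro closed_Collect_le) (auto intro: continuous_on_const)
        qed
        have Ccv: "convex Cs" unfolding Cs_def by (rule sublevel_convex[OF H4[OF taT]])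
        have minC: "gg m \<in> Cs" if mM: "m \<in> M" and mmin: "f za m = Inf (f za ` M)" for m
        proof -
          obtain y s where m: "m = (y, s)" by (cases m)
          have yB: "y \<in> B" and sI: "s \<in> I" using mM by (auto simp: M_def m)
          have s0: "s \<in> {0..<T}" "s \<in> {0..T}" "0 < s" "s < T" using IT[OF sI] by auto
          have fm: "f za m = W za" using mmin by (simp add: W_def)
          define N where "N = (norm (xa - y))\<^sup>2"
          define q where "q = exp (- \<gamma> * s) * N / \<epsilon>\<^sup>2"
          define rr where "rr = (ta - s)\<^sup>2 / \<alpha>"
          have Weq: "W za = u y s + q + rr" using fm by (simp add: f_def m zaeq q_def N_def rr_def)
          have q0: "q \<ge> 0" by (simp add: q_def N_def)
          have rr0: "rr \<ge> 0" using \<alpha> by (simp add: rr_def)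
          have uyb: "\<bar>u y s\<bar> \<le> Mb" using Mb[OF yB s0(1)] .
          have uxb: "\<bar>u xa s\<bar> \<le> Mb" using Mb[OF xaB s0(1)] .
          have "(xa, s) \<in> M" using xaB sI by (simp add: M_def)
          then have "W za \<le> f za (xa, s)" by (rule Wle)
          then have "u y s + q + rr \<le> u xa s + rr" using Weq by (simp add: f_def zaeq rr_def)
          then have q2: "q \<le> 2 * Mb" using uyb uxb unfolding abs_le_iff by linarith
          have Neq: "N = q * (exp (\<gamma> * s) * \<epsilon>\<^sup>2)"
            unfolding q_def using \<epsilon>ne by (simp add: exp_minus field_simps)
          have "\<gamma> * s \<le> \<gamma> * T" using g0 s0(4) by (intro mult_left_mono) auto
          then have eE: "exp (\<gamma> * s) \<le> E" by (simp add: E_def)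
          have eE2: "exp (\<gamma> * s) * \<epsilon>\<^sup>2 \<le> E * \<epsilon>\<^sup>2" by (rule mult_right_mono[OF eE]) simp
          have "N \<le> 2 * Mb * (E * \<epsilon>\<^sup>2)"
            unfolding Neq by (rule mult_mono[OF q2 eE2]) (use Mb0 in auto)
          moreover have "2 * Mb * (E * \<epsilon>\<^sup>2) = 2 * Mb * E * \<epsilon>\<^sup>2" by (simp only: mult.assoc)
          ultimately have Nr: "N < \<rho>\<^sup>2" using epsrho by linarith
          have dxy: "norm (xa - y) < \<rho>"
            by (rule power_less_imp_less_base[of _ 2]) (use Nr rho(1) in \<open>simp_all add: N_def\<close>)
          have yball: "y \<in> ball x0 r"
          proof -
            have "dist x0 y \<le> dist x0 xa + dist xa y" by (rule dist_triangle)
            moreover have "dist x0 xa < r - \<rho>" using xaS by simp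
            moreover have "dist xa y < \<rho>" using dxy by (simp add: dist_norm)
            ultimately show ?thesis by simp
          qed
          have "W za \<ge> U xa s + rr" using fge[OF mM, of za] fm by (simp add: m zaeq rr_def)
          moreover have "W za \<le> U xa ta" using WleU[of za] taI zaeq by simp
          ultimately have rrU: "rr \<le> U xa ta - U xa s" by linarith
          have "U xa s \<ge> - Mb" using Ulow s0 by blast
          moreover have "U xa ta \<le> Mb" using Uup xaB IT'(1)[OF taI] by blast
          ultimately have "rr \<le> 2 * Mb" using rrU by linarith
          then have "(ta - s)\<^sup>2 \<le> 2 * Mb * \<alpha>" using \<alpha> by (simp add: rr_def divide_le_eq)
          then have "\<bar>ta - s\<bar>\<^sup>2 < \<delta>'\<^sup>2" using \<alpha>2 by simp
          then have dts: "\<bar>ta - s\<bar> < \<delta>'" by (rule power_less_imp_less_base) (use \<delta>'(1) in linarith)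
          have "\<bar>U xa ta - U xa s\<bar> < \<eta>1" using \<delta>u(2)[OF xaB taI sI] dts \<delta>'(2) by linarith
          then have rr\<eta>: "rr < \<eta>1" using rrU by linarith
          have dtath: "\<bar>ta - th\<bar> < \<kappa>'" using dsnd[of za zh] dza by (simp add: zaeq zh_def)
          have sth: "\<bar>s - th\<bar> < \<delta>0" "\<bar>s - th\<bar> < \<delta>g" using dts dtath \<delta>'(4,5) \<kappa>'(5,6) by linarith+
          define \<psi> where "\<psi> = (\<lambda>p::'a \<times> real. - ((1 / \<epsilon>\<^sup>2) * exp (- \<gamma> * snd p) * ((xa - fst p) \<bullet> (xa - fst p)) + (1 / \<alpha>) * (ta - snd p)\<^sup>2))"
          have C1\<psi>: "C1_on \<psi> (UNIV \<times> {0<..<T}) (\<lambda>p. (2 * (1 / \<epsilon>\<^sup>2) * exp (- \<gamma> * snd p)) *\<^sub>R (xa - fst p))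
             (\<lambda>p. \<gamma> * (1 / \<epsilon>\<^sup>2) * exp (- \<gamma> * snd p) * ((xa - fst p) \<bullet> (xa - fst p)) + 2 * (1 / \<alpha>) * (ta - snd p))"
            unfolding \<psi>_def by (rule test_C1)
          have f\<psi>: "u y' s' - \<psi> (y', s') = f za (y', s')" for y' s'
            by (simp add: \<psi>_def f_def zaeq power2_norm_eq_inner)
          have lmin: "local_min_at (\<lambda>(y', s'). u y' s' - \<psi> (y', s')) (UNIV \<times> {0<..<T}) (y, s)"
            unfolding local_min_at_def
          proof (intro exI[of _ "min (r - dist x0 y) (\<delta>0 - \<bar>s - th\<bar>)"] conjI ballI)
            show "min (r - dist x0 y) (\<delta>0 - \<bar>s - th\<bar>) > 0" using yball sth by simp
            fix p assume p: "p \<in> ball (y, s) (min (r - dist x0 y) (\<delta>0 - \<bar>s - th\<bar>)) \<inter> UNIV \<times> {0<..<T}"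
            obtain y' s' where pe: "p = (y', s')" by (cases p)
            have d1: "dist y y' < r - dist x0 y" and d2: "\<bar>s - s'\<bar> < \<delta>0 - \<bar>s - th\<bar>"
              using p dfst[of "(y, s)" "(y', s')"] dsnd[of "(y, s)" "(y', s')"] by (auto simp: pe)
            have "dist x0 y' \<le> dist x0 y + dist y y'" by (rule dist_triangle)
            then have "y' \<in> B" using d1 by (simp add: B_def)
            moreover have "s' \<in> I" using d2 by (auto simp: I_def abs_if split: if_splits)
            ultimately have "(y', s') \<in> M" by (simp add: M_def)
            then have "W za \<le> f za (y', s')" by (rule Wle)
            then show "(\<lambda>(y', s'). u y' s' - \<psi> (y', s')) (y, s) \<le> (\<lambda>(y', s'). u y' s' - \<psi> (y', s')) p"
              using f\<psi> fm by (simp add: pe m)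
          qed
          have BJ: "\<And>\<phi> Dx Dt x t. C1_on \<phi> (UNIV \<times> {0<..<T}) Dx Dt \<Longrightarrow> t \<in> {0<..<T} \<Longrightarrow>
              local_min_at (\<lambda>(y, s). u y s - \<phi> (y, s)) (UNIV \<times> {0<..<T}) (x, t) \<Longrightarrow>
              Dt (x, t) + H x t (u x t) (Dx (x, t)) = 0"
            using u_BJ unfolding BJ_solution_def by blast
          have BJeq: "\<gamma> * (1 / \<epsilon>\<^sup>2) * exp (- \<gamma> * s) * ((xa - y) \<bullet> (xa - y)) + 2 * (1 / \<alpha>) * (ta - s)
              + H y s (u y s) ((2 * (1 / \<epsilon>\<^sup>2) * exp (- \<gamma> * s)) *\<^sub>R (xa - y)) = 0"
            using BJ[OF C1\<psi> _ lmin] s0 by simp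
          define p where "p = (2 * exp (- \<gamma> * s) / \<epsilon>\<^sup>2) *\<^sub>R (xa - y)"
          have gm: "gg m = (p, 2 * (ta - s) / \<alpha>)" by (simp add: gg_def m p_def)
          have BJ2: "\<gamma> * q + 2 * (ta - s) / \<alpha> + H y s (u y s) p = 0"
          proof -
            have "(2 * (1 / \<epsilon>\<^sup>2) * exp (- \<gamma> * s)) = 2 * exp (- \<gamma> * s) / \<epsilon>\<^sup>2" by simp
            moreover have "\<gamma> * (1 / \<epsilon>\<^sup>2) * exp (- \<gamma> * s) * ((xa - y) \<bullet> (xa - y)) = \<gamma> * q"
              by (simp add: q_def N_def power2_norm_eq_inner)
            moreover have "2 * (1 / \<alpha>) * (ta - s) = 2 * (ta - s) / \<alpha>" by simp
            ultimately show ?thesis using BJeq by (simp add: p_def)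
          qed
          have ex1: "exp (- \<gamma> * s) \<le> 1" using g0 s0 by simp
          have np: "norm p = 2 * exp (- \<gamma> * s) / \<epsilon>\<^sup>2 * norm (xa - y)" by (simp add: p_def)
          have npR: "norm p \<le> R"
          proof -
            have "2 * exp (- \<gamma> * s) / \<epsilon>\<^sup>2 * norm (xa - y) \<le> 2 * 1 / \<epsilon>\<^sup>2 * \<rho>"
              using ex1 dxy by (intro mult_mono divide_right_mono) auto
            then show ?thesis by (simp add: np R_def)
          qed
          have Wb: "\<bar>W za\<bar> \<le> Mb"
          proof -
            have "W za \<le> U xa ta" using WleU[of za] taI zaeq by simp
            moreover have "U xa ta \<le> Mb" using Uup xaB IT'(1)[OF taI] by blast
            ultimately show ?thesis using Weq q0 rr0 uyb unfolding abs_le_iff by linarith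
          qed
          have e1: "H xa ta (W za) p \<le> H xa s (W za) p + \<eta>1"
            using \<delta>H(2)[OF xaB taI sI Wb npR] dts \<delta>'(3) unfolding abs_less_iff by linarith
          have e2: "H xa s (W za) p \<le> H xa s (u y s) p + K3 * (q + rr)"
          proof -
            have "\<bar>H xa s (W za) p - H xa s (u y s) p\<bar> \<le> K3 * \<bar>W za - u y s\<bar>" by (rule H3(2)[OF s0(2)])
            moreover have "\<bar>W za - u y s\<bar> = q + rr" using Weq q0 rr0 by simp
            ultimately have "\<bar>H xa s (W za) p - H xa s (u y s) p\<bar> \<le> K3 * (q + rr)" by simp
            then show ?thesis unfolding abs_le_iff by linarith
          qed
          have e3: "H xa s (u y s) p \<le> H y s (u y s) p + C1 * (\<beta> + norm p) * norm (xa - y)"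
            using H1(3)[OF s0(2), of xa "u y s" p y] unfolding abs_le_iff by linarith
          have npn: "norm p * norm (xa - y) = 2 * q"
            by (simp add: np q_def N_def power2_eq_square)
          have am: "norm (xa - y) \<le> (q + exp (\<gamma> * s) * \<epsilon>\<^sup>2) / 2"
          proof -
            have Ep: "exp (\<gamma> * s) * \<epsilon>\<^sup>2 > 0" using \<epsilon>ne by simp
            have "q = (norm (xa - y))\<^sup>2 / (exp (\<gamma> * s) * \<epsilon>\<^sup>2)" using Neq Ep \<epsilon>ne by (simp add: N_def field_simps)
            then show ?thesis using amgm_aux[OF Ep, of "norm (xa - y)"] by simp
          qed
          have b0: "\<beta> \<ge> 0" using H1(2) by auto
          have e4: "C1 * (\<beta> + norm p) * norm (xa - y) \<le> C1 * \<beta> * ((q + exp (\<gamma> * s) * \<epsilon>\<^sup>2) / 2) + 2 * C1 * q"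
          proof -
            have "C1 * (\<beta> + norm p) * norm (xa - y) = C1 * \<beta> * norm (xa - y) + C1 * (norm p * norm (xa - y))"
              by (simp add: algebra_simps)
            also have "\<dots> = C1 * \<beta> * norm (xa - y) + 2 * C1 * q" using npn by simp
            also have "C1 * \<beta> * norm (xa - y) \<le> C1 * \<beta> * ((q + exp (\<gamma> * s) * \<epsilon>\<^sup>2) / 2)"
              using am H1(1) b0 by (intro mult_left_mono) auto
            finally show ?thesis by simp
          qed
          have e5: "\<beta> * C1 / 2 * exp (\<gamma> * s) * \<epsilon>\<^sup>2 < g0 + \<eta>1" using \<delta>g(2) sth(2) by simp
          have gam: "(K3 + C1 * \<beta> / 2 + 2 * C1 - \<gamma>) * q \<le> 0"
            using gamma q0 by (intro mult_nonpos_nonneg) (auto simp: algebra_simps)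
          have K3rr: "K3 * rr \<le> K3 * \<eta>1" using H3(1) rr\<eta> by (intro mult_left_mono) auto
          have x1: "C1 * \<beta> * ((q + exp (\<gamma> * s) * \<epsilon>\<^sup>2) / 2) = C1 * \<beta> / 2 * q + \<beta> * C1 / 2 * exp (\<gamma> * s) * \<epsilon>\<^sup>2"
            by (simp add: algebra_simps)
          have x2: "(K3 + C1 * \<beta> / 2 + 2 * C1 - \<gamma>) * q = K3 * q + C1 * \<beta> / 2 * q + 2 * C1 * q - \<gamma> * q"
            by (simp add: algebra_simps)
          have x3: "K3 * (q + rr) = K3 * q + K3 * rr" by (simp add: algebra_simps)
          have x4: "(2 + K3) * \<eta>1 = 2 * \<eta>1 + K3 * \<eta>1" by (simp add: algebra_simps)
          define A where "A = C1 * (\<beta> + norm p) * norm (xa - y)"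
          define Es where "Es = \<beta> * C1 / 2 * exp (\<gamma> * s) * \<epsilon>\<^sup>2"
          define L where "L = (K3 + C1 * \<beta> / 2 + 2 * C1 - \<gamma>) * q"
          have c1: "2 * (ta - s) / \<alpha> + H xa ta (W za) p \<le> 2 * (ta - s) / \<alpha> + H y s (u y s) p + \<eta>1 + (K3 * q + K3 * rr) + A"
            using e1 e2 e3 x3 unfolding A_def by linarith
          have c2: "2 * (ta - s) / \<alpha> + H y s (u y s) p = - (\<gamma> * q)" using BJ2 by linarith
          have c3: "A \<le> C1 * \<beta> / 2 * q + Es + 2 * C1 * q" using e4 x1 unfolding A_def Es_def by linarith
          have c4: "L = K3 * q + C1 * \<beta> / 2 * q + 2 * C1 * q - \<gamma> * q" using x2 unfolding L_def .
          have c5: "L \<le> 0" using gam unfolding L_def .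
          have c6: "Es < g0 + \<eta>1" using e5 unfolding Es_def .
          have "2 * (ta - s) / \<alpha> + H xa ta (W za) p \<le> \<Gamma>"
            using c1 c2 c3 c4 c5 c6 K3rr x4 unfolding \<Gamma>_def by linarith
          then show ?thesis by (simp add: gm Cs_def)
        qed
        have "G \<in> Cs"
          by (rule danskin_sep[OF Mc Mne fc ggc quad Qb mx \<delta>2 der Ccl Ccv minC])
        then have Lle: "\<Lambda> za (W za) \<le> \<Gamma>" by (simp add: Cs_def G_def \<Lambda>_def zaeq)
        have "dist za zh < \<kappa>" using dza \<kappa>'(2) by linarith
        from \<kappa>(2)[OF zaS this Wzab] have "\<Lambda> za (W za) > \<Lambda> zh (U xh th) - \<eta>1" .
        moreover have "\<Lambda> zh (U xh th) = g0 + \<Theta>" by (simp add: \<Lambda>_def \<Theta>_def zh_def)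
        ultimately show False using Lle \<eta>1\<Theta> by (simp add: \<Gamma>_def algebra_simps)
      qed
      then show "Dt (xh, th) + H xh th ((\<lambda>x t. INF y\<in>cball x0 r. u y t + exp (- \<gamma> * t) * (norm (x - y))\<^sup>2 / \<epsilon>\<^sup>2) xh th) (Dx (xh, th))
          \<le> \<beta> * C1 / 2 * exp (\<gamma> * th) * \<epsilon>\<^sup>2"
        by (simp add: U_def B_def zh_def)
    qed
  qed
qed

end
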